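(* Let $r$ be a positive integer and let $M\in\{0,1\}^{n\times n}$ with $\operatorname{rank}(M)\leq r$ and $p(M)\leq\frac{1}{8r}$. Then $z(M)\geq n/4$.
   Context: $p(M)=|M|/n^2$, where $|M|$ is the number of $1$ entries. $z(M)$ is the largest $z$ for which there exist $X,Y\subset[n]$ with $|X|=|Y|=z$ such that the submatrix $M[X\times Y]$ (rows $X$, columns $Y$) has only $0$ entries. *)

theory Defs
  imports "HOL-Analysis.Analysis"
begin

definition density :: "real^'n^'n \<Rightarrow> real" where
  "density M = real (card {(i, j). M $ i $ j = 1}) / (real CARD('n))^2"

definition zrect :: "real^'n^'n \<Rightarrow> nat" where
  "zrect M = Max {z. \<exists>X Y. card X = z \<and> card Y = z \<and> (\<forall>i\<in>X. \<forall>j\<in>Y. M $ i $ j = 0)}"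

end

theory Submission
  imports Defs
begin

theorem lemma4p1:
  fixes M :: "real^'n^'n" and r :: nat
  assumes "r > 0"
    and "\<forall>i j. M $ i $ j \<in> {0, 1}"
    and "rank M \<le> r"
    and "density M \<le> 1 / (8 * real r)"
  shows "real (zrect M) \<ge> real CARD('n) / 4"
proof -
  define n where "n = CARD('n)"
  have npos: "n > 0" unfolding n_def by simp
  define c where "c i = card {j. M $ i $ j = 1}" for i
  define t where "t = real n / (4 * real r)"
  define L where "L = {i. real (c i) \<le> t}"
  have rpos: "real r > 0" using assms(1) by simp
  have tot: "card {(i, j). M $ i $ j = 1} = (\<Sum>i\<in>UNIV. c i)"
  proof -
    have "{(i, j). M $ i $ j = 1} = (SIGMA i:UNIV. {j. M $ i $ j = 1})" by auto
    then show ?thesis unfolding c_def by simp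
  qed
  have totle: "(\<Sum>i\<in>UNIV. real (c i)) \<le> real n ^ 2 / (8 * real r)"
  proof -
    have "real (\<Sum>i\<in>UNIV. c i) / (real n)^2 \<le> 1 / (8 * real r)"
      using assms(4) unfolding density_def tot n_def .
    then have "real (\<Sum>i\<in>UNIV. c i) \<le> real n ^ 2 / (8 * real r)"
      using npos by (simp add: field_simps)
    then show ?thesis by simp
  qed
  have Lcard: "real (card L) \<ge> real n / 2"
  proof -
    have "real (card (UNIV - L)) * t \<le> (\<Sum>i\<in>UNIV - L. real (c i))"
    proof -
      have "(\<Sum>i\<in>UNIV - L. t) \<le> (\<Sum>i\<in>UNIV - L. real (c i))"
        by (rule sum_mono) (auto simp: L_def)
      then show ?thesis by simp
    qed
    also have "\<dots> \<le> (\<Sum>i\<in>UNIV. real (c i))"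
      by (rule sum_mono2) auto
    also have "\<dots> \<le> real n ^ 2 / (8 * real r)" by (rule totle)
    finally have "real (card (UNIV - L)) * t \<le> real n ^ 2 / (8 * real r)" .
    then have h1: "real (card (UNIV - L)) * real n * 2 \<le> real n * real n"
      unfolding t_def using rpos by (simp add: power2_eq_square field_simps)
    have h: "real (card (UNIV - L)) \<le> real n / 2"
    proof (rule ccontr)
      assume "\<not> ?thesis"
      then have "real (card (UNIV - L)) * 2 > real n" by simp
      then have "real (card (UNIV - L)) * 2 * real n > real n * real n"
        using npos by (simp add: mult_strict_right_mono)
      then show False using h1 by (simp add: algebra_simps)
    qed
    have "card (UNIV - L) + card L = n"
      unfolding n_def by (metis Diff_partition card_Un_disjoint finite Diff_disjoint add.commute subset_UNIV inf_commute)
    then show ?thesis using h by linarith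
  qed
  define S where "S = (\<lambda>i. M $ i) ` L"
  have "dim S \<le> dim (rows M)"
    by (rule dim_subset) (auto simp: S_def rows_def row_def)
  then have dimS: "dim S \<le> r" using assms(3) by (simp add: row_rank_def)
  obtain B where B: "B \<subseteq> S" "independent B" "S \<subseteq> span B" "card B = dim S"
    using basis_exists[of S] by blast
  have finB: "finite B" using B(1) unfolding S_def by (meson finite finite_imageI finite_subset)
  define Z where "Z = (\<Union>b\<in>B. {j. b $ j \<noteq> 0})"
  have suppb: "real (card {j. b $ j \<noteq> 0}) \<le> t" if bB: "b \<in> B" for b
  proof -
    obtain i where i: "i \<in> L" "b = M $ i" using bB B(1) unfolding S_def by auto
    have "{j. b $ j \<noteq> 0} = {j. M $ i $ j = 1}" using assms(2) i(2) by force
    then show ?thesis using i(1) unfolding L_def c_def by simp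
  qed
  have "real (card Z) \<le> (\<Sum>b\<in>B. real (card {j. b $ j \<noteq> 0}))"
  proof -
    have "card Z \<le> (\<Sum>b\<in>B. card {j. b $ j \<noteq> 0})" unfolding Z_def by (rule card_UN_le[OF finB])
    then show ?thesis by (metis of_nat_le_iff of_nat_sum)
  qed
  also have "\<dots> \<le> (\<Sum>b\<in>B. t)" by (rule sum_mono) (rule suppb)
  also have "\<dots> = real (card B) * t" by simp
  also have "\<dots> \<le> real r * t"
    using B(4) dimS by (intro mult_right_mono) (auto simp: t_def)
  also have "\<dots> = real n / 4" unfolding t_def using rpos by (simp add: field_simps)
  finally have Zc: "real (card Z) \<le> real n / 4" .
  define Y where "Y = UNIV - Z"
  have Yc: "real (card Y) \<ge> real n / 2"
  proof -
    have "card Y + card Z = n"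
      unfolding n_def Y_def by (metis Diff_partition card_Un_disjoint finite Diff_disjoint add.commute subset_UNIV inf_commute)
    then show ?thesis using Zc by linarith
  qed
  have zero: "M $ i $ j = 0" if "i \<in> L" "j \<in> Y" for i j
  proof -
    have sub: "subspace {v::real^'n. \<forall>j\<in>Y. v $ j = 0}"
      unfolding subspace_def by auto
    have "M $ i \<in> span B" using B(3) that(1) unfolding S_def by auto
    have "B \<subseteq> {v::real^'n. \<forall>j\<in>Y. v $ j = 0}" unfolding Y_def Z_def by auto
    then have "span B \<subseteq> {v::real^'n. \<forall>j\<in>Y. v $ j = 0}" using sub by (rule span_minimal)
    then have "M $ i \<in> {v::real^'n. \<forall>j\<in>Y. v $ j = 0}" using \<open>M $ i \<in> span B\<close> by blast
    then show ?thesis using that(2) by auto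
  qed
  define k where "k = min (card L) (card Y)"
  obtain X where X: "X \<subseteq> L" "card X = k"
    using obtain_subset_with_card_n[of k L] unfolding k_def by auto
  obtain Y' where Y': "Y' \<subseteq> Y" "card Y' = k"
    using obtain_subset_with_card_n[of k Y] unfolding k_def by auto
  have kin: "k \<in> {z. \<exists>X Y. card X = z \<and> card Y = z \<and> (\<forall>i\<in>X. \<forall>j\<in>Y. M $ i $ j = 0)}"
    using X Y' zero by blast
  have fin: "finite {z. \<exists>X Y. card X = z \<and> card Y = z \<and> (\<forall>i\<in>X. \<forall>(j::'n)\<in>Y. M $ i $ j = 0)}"
  proof (rule finite_subset[of _ "{..CARD('n)}"])
    show "{z. \<exists>X Y. card X = z \<and> card Y = z \<and> (\<forall>i\<in>X. \<forall>(j::'n)\<in>Y. M $ i $ j = 0)} \<subseteq> {..CARD('n)}"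
      using card_mono[OF finite subset_UNIV] by (auto simp: card_UNIV)
  qed simp
  have "k \<le> zrect M" unfolding zrect_def by (rule Max_ge[OF fin kin])
  moreover have "real k \<ge> real n / 2" unfolding k_def using Lcard Yc by simp
  ultimately show ?thesis unfolding n_def by linarith
qed

end
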